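(* Under the standing assumptions of the context, with $C$ defined from $E$ and $\le$ as in the context, the order $\le$ is compatible with $C$, i.e. $x<y<z$ implies $C(x;y,z)\vee C(z;x,y)$; and $C$ satisfies (C8): whenever $C(x;y,z)$ holds there exist $w_1,w_2\in N$ with $C(w_1;y,z)\wedge C(x;y,w_1)\wedge w_1<\min\{y,z\}$ and $C(w_2;y,z)\wedge C(x;y,w_2)\wedge\max\{y,z\}<w_2$.
   Context: Standing assumptions: $(N,E)$ is a countably infinite 3-hypergraph (a set $N$ with a set $E$ of 3-element subsets, the edges) which is ${\le}4$-set-homogeneous (for $s\le4$, whenever $U,V\subseteq N$ of size $s$ carry isomorphic induced subhypergraphs there is $g\in \mathrm{Aut}(N,E)$ with $U^g=V$), and $\le$ is a total order on $N$ preserved by $\mathrm{Aut}(N,E)$. Moreover, for each $i\in\{1,2,3\}$ there is a 4-subset of $N$ containing exactly $i$ edges, and for all $u_1<u_2<u_3<u_4$ in $N$: if $\{u_1,\dots,u_4\}$ contains exactly one edge, it is $\{u_1,u_2,u_3\}$; if it contains exactly two edges, they are $\{u_1,u_3,u_4\}$ and $\{u_2,u_3,u_4\}$; if it contains exactly three edges, they are the three 3-subsets containing $u_1$. The relation $C$ on $N$ is: $C(x;y,z)$ iff either $y=z\ne x$; or $x,y,z$ distinct, $x<\min\{y,z\}$ and $\{x,y,z\}\in E$; or $x,y,z$ distinct, $\max\{y,z\}<x$ and $\{x,y,z\}\notin E$. *)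

theory Defs
  imports Main "HOL-Library.Countable_Set"
begin

definition hypergraph3 :: "'a set \<Rightarrow> 'a set set \<Rightarrow> bool" where
  "hypergraph3 N E \<longleftrightarrow> (\<forall>e\<in>E. e \<subseteq> N \<and> card e = 3)"

definition hg_aut :: "'a set \<Rightarrow> 'a set set \<Rightarrow> ('a \<Rightarrow> 'a) \<Rightarrow> bool" where
  "hg_aut N E g \<longleftrightarrow> bij_betw g N N \<and> (\<forall>A. A \<subseteq> N \<longrightarrow> (A \<in> E \<longleftrightarrow> g ` A \<in> E))"

definition induced_iso :: "'a set set \<Rightarrow> 'a set \<Rightarrow> 'a set \<Rightarrow> bool" where
  "induced_iso E U V \<longleftrightarrow> (\<exists>f. bij_betw f U V \<and> (\<forall>A. A \<subseteq> U \<longrightarrow> (A \<in> E \<longleftrightarrow> f ` A \<in> E)))"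

definition le4_set_homogeneous :: "'a set \<Rightarrow> 'a set set \<Rightarrow> bool" where
  "le4_set_homogeneous N E \<longleftrightarrow>
     (\<forall>U V. U \<subseteq> N \<and> V \<subseteq> N \<and> finite U \<and> finite V \<and> card U \<le> 4 \<and> card V = card U
        \<and> induced_iso E U V \<longrightarrow> (\<exists>g. hg_aut N E g \<and> g ` U = V))"

definition lt :: "'a rel \<Rightarrow> 'a \<Rightarrow> 'a \<Rightarrow> bool" where
  "lt R x y \<longleftrightarrow> (x, y) \<in> R \<and> x \<noteq> y"

definition n_edges :: "'a set set \<Rightarrow> 'a set \<Rightarrow> nat" where
  "n_edges E U = card {e\<in>E. e \<subseteq> U}"

definition Crel :: "'a set set \<Rightarrow> 'a rel \<Rightarrow> 'a \<Rightarrow> 'a \<Rightarrow> 'a \<Rightarrow> bool" where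
  "Crel E R x y z \<longleftrightarrow>
     (y = z \<and> z \<noteq> x)
   \<or> (x \<noteq> y \<and> y \<noteq> z \<and> x \<noteq> z \<and> lt R x y \<and> lt R x z \<and> {x, y, z} \<in> E)
   \<or> (x \<noteq> y \<and> y \<noteq> z \<and> x \<noteq> z \<and> lt R y x \<and> lt R z x \<and> {x, y, z} \<notin> E)"

definition standing_assms :: "'a set \<Rightarrow> 'a set set \<Rightarrow> 'a rel \<Rightarrow> bool" where
  "standing_assms N E R \<longleftrightarrow>
     countable N \<and> infinite N \<and> hypergraph3 N E \<and> le4_set_homogeneous N E
   \<and> linear_order_on N R
   \<and> (\<forall>g x y. hg_aut N E g \<and> x \<in> N \<and> y \<in> N \<and> (x, y) \<in> R \<longrightarrow> (g x, g y) \<in> R)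
   \<and> (\<forall>i\<in>{1,2,3::nat}. \<exists>U. U \<subseteq> N \<and> card U = 4 \<and> n_edges E U = i)
   \<and> (\<forall>u1 u2 u3 u4. u1 \<in> N \<and> u2 \<in> N \<and> u3 \<in> N \<and> u4 \<in> N
        \<and> lt R u1 u2 \<and> lt R u2 u3 \<and> lt R u3 u4 \<longrightarrow>
        (n_edges E {u1,u2,u3,u4} = 1 \<longrightarrow> {e\<in>E. e \<subseteq> {u1,u2,u3,u4}} = {{u1,u2,u3}})
      \<and> (n_edges E {u1,u2,u3,u4} = 2 \<longrightarrow> {e\<in>E. e \<subseteq> {u1,u2,u3,u4}} = {{u1,u3,u4},{u2,u3,u4}})
      \<and> (n_edges E {u1,u2,u3,u4} = 3 \<longrightarrow> {e\<in>E. e \<subseteq> {u1,u2,u3,u4}} = {{u1,u2,u3},{u1,u2,u4},{u1,u3,u4}}))"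

end

theory Submission
  imports Defs
begin

lemma sa_lin: "standing_assms N E R \<Longrightarrow> linear_order_on N R"
  by (simp add: standing_assms_def)

lemma lt_trans: assumes "linear_order_on N R" "x \<in> N" "y \<in> N" "z \<in> N" "lt R x y" "lt R y z"
  shows "lt R x z"
  using assms unfolding linear_order_on_def partial_order_on_def preorder_on_def lt_def trans_def antisym_def
  by blast

lemma lt_asym: assumes "linear_order_on N R" "lt R x y" shows "\<not> lt R y x"
  using assms unfolding linear_order_on_def partial_order_on_def preorder_on_def lt_def antisym_def
  by blast

lemma lt_total: assumes "linear_order_on N R" "x \<in> N" "y \<in> N" "x \<noteq> y"
  shows "lt R x y \<or> lt R y x"
  using assms unfolding linear_order_on_def total_on_def lt_def by blast

lemma lt_irr: "\<not> lt R x x" by (simp add: lt_def)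

lemma min_ex: assumes "linear_order_on N R" "finite S" "S \<noteq> {}" "S \<subseteq> N"
  shows "\<exists>m\<in>S. \<forall>s\<in>S. s \<noteq> m \<longrightarrow> lt R m s"
  using assms(2,3,4)
proof (induction S rule: finite_ne_induct)
  case (singleton x) then show ?case by auto
next
  case (insert x F)
  then obtain m where m: "m \<in> F" "\<forall>s\<in>F. s \<noteq> m \<longrightarrow> lt R m s" by auto
  have xN: "x \<in> N" and FN: "F \<subseteq> N" using insert by auto
  have "m \<noteq> x" using m insert by auto
  then consider "lt R x m" | "lt R m x" using lt_total[OF assms(1) xN] m FN by blast
  then show ?case
  proof cases
    case 1
    show ?thesis
    proof (rule bexI[of _ x], intro ballI impI)
      fix s assume "s \<in> insert x F" "s \<noteq> x"
      then have "s \<in> F" by auto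
      then show "lt R x s" using m 1 lt_trans[OF assms(1) xN, of m s] FN `m \<in> F` by (cases "s = m") auto
    qed auto
  next
    case 2
    show ?thesis using m 2 by (intro bexI[of _ m]) auto
  qed
qed

lemma sort4: assumes "linear_order_on N R" "U \<subseteq> N" "card U = 4"
  shows "\<exists>u1 u2 u3 u4. U = {u1,u2,u3,u4} \<and> lt R u1 u2 \<and> lt R u2 u3 \<and> lt R u3 u4
     \<and> u1 \<in> N \<and> u2 \<in> N \<and> u3 \<in> N \<and> u4 \<in> N"
proof -
  have fU: "finite U" using assms(3) card.infinite by fastforce
  have "U \<noteq> {}" using assms(3) by auto
  then obtain m1 where m1: "m1 \<in> U" "\<forall>s\<in>U. s \<noteq> m1 \<longrightarrow> lt R m1 s"
    using min_ex[OF assms(1) fU _ assms(2)] by blast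
  define U1 where "U1 = U - {m1}"
  have c1: "card U1 = 3" using m1 fU assms(3) by (simp add: U1_def)
  have f1: "finite U1" "U1 \<subseteq> N" using fU assms(2) by (auto simp: U1_def)
  have f1b: "U1 \<noteq> {}" using c1 by auto
  obtain m2 where m2: "m2 \<in> U1" "\<forall>s\<in>U1. s \<noteq> m2 \<longrightarrow> lt R m2 s"
    using min_ex[OF assms(1) f1(1) f1b f1(2)] by blast
  define U2 where "U2 = U1 - {m2}"
  have c2: "card U2 = 2" using m2 c1 f1 by (simp add: U2_def)
  have f2: "finite U2" "U2 \<subseteq> N" using f1 by (auto simp: U2_def)
  have f2b: "U2 \<noteq> {}" using c2 by auto
  obtain m3 where m3: "m3 \<in> U2" "\<forall>s\<in>U2. s \<noteq> m3 \<longrightarrow> lt R m3 s"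
    using min_ex[OF assms(1) f2(1) f2b f2(2)] by blast
  define U3 where "U3 = U2 - {m3}"
  have c3: "card U3 = 1" using m3 c2 f2 by (simp add: U3_def)
  then obtain m4 where m4: "U3 = {m4}" by (auto simp: card_Suc_eq)
  have m4U2: "m4 \<in> U2" "m4 \<noteq> m3" using m4 unfolding U3_def by auto
  have m3U1: "m3 \<in> U1" "m3 \<noteq> m2" using m3 unfolding U2_def by auto
  have m2U: "m2 \<in> U" "m2 \<noteq> m1" using m2 unfolding U1_def by auto
  have m4U1: "m4 \<in> U1" using m4U2 unfolding U2_def by auto
  have m4U: "m4 \<in> U" using m4U1 unfolding U1_def by auto
  have m3U: "m3 \<in> U" using m3U1 unfolding U1_def by auto
  have e3: "U2 = {m3,m4}" using m3(1) m4 unfolding U3_def by (metis insert_Diff)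
  have e2: "U1 = {m2,m3,m4}" using m2(1) e3 unfolding U2_def by (metis insert_Diff)
  have U: "U = {m1,m2,m3,m4}" using m1(1) e2 unfolding U1_def by (metis insert_Diff)
  have o: "lt R m1 m2" "lt R m2 m3" "lt R m3 m4"
    using m1(2) m2U m2(2) m3U1 m3(2) m4U2 by blast+
  show ?thesis
    apply (rule exI[of _ m1], rule exI[of _ m2], rule exI[of _ m3], rule exI[of _ m4])
    using U o m1(1) m2U m3U m4U assms(2) by blast
qed

lemma sa_hg: "standing_assms N E R \<Longrightarrow> e \<in> E \<Longrightarrow> card e = 3"
  by (simp add: standing_assms_def hypergraph3_def)

lemma sa_hom: "standing_assms N E R \<Longrightarrow> le4_set_homogeneous N E"
  by (simp add: standing_assms_def)

lemma aut_N: "hg_aut N E g \<Longrightarrow> x \<in> N \<Longrightarrow> g x \<in> N"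
  unfolding hg_aut_def by (meson bij_betw_apply)

lemma aut_lt: assumes "standing_assms N E R" "hg_aut N E g" "x \<in> N" "y \<in> N" "lt R x y"
  shows "lt R (g x) (g y)"
proof -
  have P: "\<forall>g x y. hg_aut N E g \<and> x \<in> N \<and> y \<in> N \<and> (x, y) \<in> R \<longrightarrow> (g x, g y) \<in> R"
    using assms(1) by (simp add: standing_assms_def)
  have "(g x, g y) \<in> R" using P assms(2-5) unfolding lt_def by blast
  moreover have "g x \<noteq> g y" using assms(2-5) unfolding hg_aut_def bij_betw_def inj_on_def lt_def by blast
  ultimately show ?thesis by (simp add: lt_def)
qed

lemma aut_E3: assumes "hg_aut N E g" "a \<in> N" "b \<in> N" "c \<in> N"
  shows "{g a, g b, g c} \<in> E \<longleftrightarrow> {a,b,c} \<in> E"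
proof -
  have "{a,b,c} \<subseteq> N" using assms by auto
  then show ?thesis using assms(1) unfolding hg_aut_def by auto
qed

lemma chain3_eq: assumes "linear_order_on N R" "a \<in> N" "b \<in> N" "c \<in> N" "x \<in> N" "y \<in> N" "z \<in> N"
  "lt R a b" "lt R b c" "lt R x y" "lt R y z" "{a,b,c} = {x,y,z}"
  shows "a = x \<and> b = y \<and> c = z"
proof -
  have ac: "lt R a c" using lt_trans[OF assms(1,2,3,4,8,9)] .
  have xz: "lt R x z" using lt_trans[OF assms(1,5,6,7,10,11)] .
  have n: "\<not> lt R b a" "\<not> lt R c b" "\<not> lt R c a" "\<not> lt R y x" "\<not> lt R z y" "\<not> lt R z x"
    using lt_asym[OF assms(1)] ac xz assms(8-11) by blast+
  have i: "\<And>t. \<not> lt R t t" by (simp add: lt_def)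
  have ab: "a \<noteq> b" "b \<noteq> c" "a \<noteq> c" using assms(8,9) ac by (auto simp: lt_def)
  have S: "a \<in> {x,y,z}" "b \<in> {x,y,z}" "c \<in> {x,y,z}" "x \<in> {a,b,c}" "z \<in> {a,b,c}"
    using assms(12) by blast+
  have ax: "a = x"
  proof (rule ccontr)
    assume "a \<noteq> x"
    then consider "lt R a x" | "lt R x a" using lt_total[OF assms(1,2,5)] by blast
    then show False
    proof cases
      case 1 then show ?thesis using S(1) n i by blast
    next
      case 2 then show ?thesis using S(4) n i by blast
    qed
  qed
  have cz: "c = z"
  proof (rule ccontr)
    assume "c \<noteq> z"
    then consider "lt R c z" | "lt R z c" using lt_total[OF assms(1,4,7)] by blast
    then show False
    proof cases
      case 1 then show ?thesis using S(5) n i by blast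
    next
      case 2 then show ?thesis using S(3) n i by blast
    qed
  qed
  have "b = y" using S(2) ab ax cz by blast
  then show ?thesis using ax cz by blast
qed

lemma map3: assumes sa: "standing_assms N E R" and N: "p \<in> N" "q \<in> N" "r \<in> N" "x \<in> N" "y \<in> N" "z \<in> N"
  and o: "lt R p q" "lt R q r" "lt R x y" "lt R y z" and e: "{p,q,r} \<in> E \<longleftrightarrow> {x,y,z} \<in> E"
  shows "\<exists>g. hg_aut N E g \<and> g p = x \<and> g q = y \<and> g r = z"
proof -
  have lin: "linear_order_on N R" using sa by (simp add: standing_assms_def)
  have pr: "lt R p r" and xz: "lt R x z" using lt_trans[OF lin] N o by metis+
  have d: "p \<noteq> q" "q \<noteq> r" "p \<noteq> r" "x \<noteq> y" "y \<noteq> z" "x \<noteq> z"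
    using o pr xz by (auto simp: lt_def)
  define U where "U = {p,q,r}"
  define V where "V = {x,y,z}"
  define f where "f = (\<lambda>t. if t = p then x else if t = q then y else z)"
  have cU: "card U = 3" and cV: "card V = 3" using d by (auto simp: U_def V_def)
  have fU: "finite U" by (simp add: U_def)
  have inj: "inj_on f U" using d unfolding inj_on_def f_def U_def by auto
  have img: "f ` U = V" using d unfolding f_def U_def V_def by auto
  have bij: "bij_betw f U V" using inj img by (simp add: bij_betw_def)
  have iso: "\<forall>A. A \<subseteq> U \<longrightarrow> (A \<in> E \<longleftrightarrow> f ` A \<in> E)"
  proof (intro allI impI)
    fix A assume AU: "A \<subseteq> U"
    have inA: "inj_on f A" using inj AU inj_on_subset by blast
    have "A \<in> E \<longleftrightarrow> A = U \<and> U \<in> E"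
    proof
      assume "A \<in> E"
      then have "card A = 3" using sa_hg[OF sa] by blast
      then have "A = U" using AU cU fU by (metis card_subset_eq)
      then show "A = U \<and> U \<in> E" using `A \<in> E` by simp
    qed auto
    moreover have "f ` A \<in> E \<longleftrightarrow> A = U \<and> V \<in> E"
    proof
      assume "f ` A \<in> E"
      then have "card (f ` A) = 3" using sa_hg[OF sa] by blast
      then have "card A = 3" using card_image[OF inA] by simp
      then have "A = U" using AU cU fU by (metis card_subset_eq)
      then show "A = U \<and> V \<in> E" using \<open>f ` A \<in> E\<close> img by simp
    qed (use img in auto)
    ultimately show "A \<in> E \<longleftrightarrow> f ` A \<in> E" using e unfolding U_def V_def by auto
  qed
  have "induced_iso E U V" unfolding induced_iso_def using bij iso by blast
  moreover have "U \<subseteq> N" "V \<subseteq> N" "finite V" using N by (auto simp: U_def V_def)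
  moreover have "card U \<le> 4" "card V = card U" using cU cV by simp_all
  ultimately obtain g where g: "hg_aut N E g" "g ` U = V"
    using sa_hom[OF sa] fU unfolding le4_set_homogeneous_def by blast
  have "{g p, g q, g r} = {x,y,z}" using g(2) by (simp add: U_def V_def)
  moreover have "lt R (g p) (g q)" "lt R (g q) (g r)" using aut_lt[OF sa g(1)] N o by auto
  moreover have "g p \<in> N" "g q \<in> N" "g r \<in> N" using aut_N[OF g(1)] N by auto
  ultimately have "g p = x \<and> g q = y \<and> g r = z" using chain3_eq[OF lin, of "g p" "g q" "g r" x y z] N o by simp
  then show ?thesis using g(1) by blast
qed





lemma map2: assumes sa: "standing_assms N E R" and N: "p \<in> N" "q \<in> N" "x \<in> N" "y \<in> N"
  and o: "lt R p q" "lt R x y"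
  shows "\<exists>g. hg_aut N E g \<and> g p = x \<and> g q = y"
proof -
  have lin: "linear_order_on N R" using sa by (simp add: standing_assms_def)
  have d: "p \<noteq> q" "x \<noteq> y" using o by (auto simp: lt_def)
  define U where "U = {p,q}"
  define V where "V = {x,y}"
  define f where "f = (\<lambda>t. if t = p then x else y)"
  have cU: "card U = 2" and cV: "card V = 2" using d by (auto simp: U_def V_def)
  have fU: "finite U" by (simp add: U_def)
  have inj: "inj_on f U" using d unfolding inj_on_def f_def U_def by auto
  have img: "f ` U = V" using d unfolding f_def U_def V_def by auto
  have bij: "bij_betw f U V" using inj img by (simp add: bij_betw_def)
  have iso: "\<forall>A. A \<subseteq> U \<longrightarrow> (A \<in> E \<longleftrightarrow> f ` A \<in> E)"
  proof (intro allI impI)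
    fix A assume AU: "A \<subseteq> U"
    have c1: "card A \<le> 2" using card_mono[OF fU AU] cU by simp
    have c2: "card (f ` A) \<le> 2" using card_image_le[of A f] c1 AU fU finite_subset by fastforce
    have "A \<notin> E" using c1 sa_hg[OF sa, of A] by auto
    moreover have "f ` A \<notin> E" using c2 sa_hg[OF sa, of "f ` A"] by auto
    ultimately show "A \<in> E \<longleftrightarrow> f ` A \<in> E" by simp
  qed
  have "induced_iso E U V" unfolding induced_iso_def using bij iso by blast
  moreover have "U \<subseteq> N" "V \<subseteq> N" "finite V" using N by (auto simp: U_def V_def)
  moreover have "card U \<le> 4" "card V = card U" using cU cV by simp_all
  ultimately obtain g where g: "hg_aut N E g" "g ` U = V"
    using sa_hom[OF sa] fU unfolding le4_set_homogeneous_def by blast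
  have e: "{g p, g q} = {x,y}" using g(2) by (simp add: U_def V_def)
  have l: "lt R (g p) (g q)" using aut_lt[OF sa g(1)] N o by auto
  have "g p = x"
  proof (rule ccontr)
    assume "g p \<noteq> x"
    then have "g p = y" "g q = x" using e d by (auto simp: doubleton_eq_iff)
    then show False using l o(2) lt_asym[OF lin] by metis
  qed
  moreover then have "g q = y" using e d l by (auto simp: doubleton_eq_iff lt_def)
  ultimately show ?thesis using g(1) by blast
qed

lemma tri4: assumes d: "a \<noteq> b" "a \<noteq> c" "a \<noteq> d" "b \<noteq> c" "b \<noteq> d" "c \<noteq> d"
  and e: "e \<subseteq> {a,b,c,d}" "card e = 3"
  shows "e = {a,b,c} \<or> e = {a,b,d} \<or> e = {a,c,d} \<or> e = {b,c,d}"
proof -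
  define U where "U = {a,b,c,d}"
  have cU: "card U = 4" using d by (simp add: U_def)
  have fU: "finite U" by (simp add: U_def)
  have "card (U - e) = 1" using card_Diff_subset[of e U] e fU cU finite_subset unfolding U_def by fastforce
  then obtain t where t: "U - e = {t}" by (auto simp: card_Suc_eq)
  have eq: "e = U - {t}" using t e(1) unfolding U_def by blast
  have "t \<in> U" using t by blast
  then consider "t = a" | "t = b" | "t = c" | "t = d" unfolding U_def by blast
  then show ?thesis
  proof cases
    case 1 then have "e = {b,c,d}" using eq d unfolding U_def by (simp add: insert_Diff_if)
    then show ?thesis by blast
  next
    case 2 then have "e = {a,c,d}" using eq d unfolding U_def by (simp add: insert_Diff_if)
    then show ?thesis by blast
  next
    case 3 then have "e = {a,b,d}" using eq d unfolding U_def by (simp add: insert_Diff_if)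
    then show ?thesis by blast
  next
    case 4 then have "e = {a,b,c}" using eq d unfolding U_def by (simp add: insert_Diff_if)
    then show ?thesis by blast
  qed
qed

lemma card3_le: "card {x, y, z} \<le> 3"
  by (auto simp: card_insert_if)

lemma card2_le: "card {x, y} \<le> 2"
  by (auto simp: card_insert_if)

lemma sa_pat: assumes "standing_assms N E R"
  shows "\<forall>u1 u2 u3 u4. u1 \<in> N \<and> u2 \<in> N \<and> u3 \<in> N \<and> u4 \<in> N
        \<and> lt R u1 u2 \<and> lt R u2 u3 \<and> lt R u3 u4 \<longrightarrow>
        (n_edges E {u1,u2,u3,u4} = 1 \<longrightarrow> {e\<in>E. e \<subseteq> {u1,u2,u3,u4}} = {{u1,u2,u3}})
      \<and> (n_edges E {u1,u2,u3,u4} = 2 \<longrightarrow> {e\<in>E. e \<subseteq> {u1,u2,u3,u4}} = {{u1,u3,u4},{u2,u3,u4}})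
      \<and> (n_edges E {u1,u2,u3,u4} = 3 \<longrightarrow> {e\<in>E. e \<subseteq> {u1,u2,u3,u4}} = {{u1,u2,u3},{u1,u2,u4},{u1,u3,u4}})"
  using assms unfolding standing_assms_def by (elim conjE) assumption

lemma sa_ex: assumes "standing_assms N E R"
  shows "\<forall>i\<in>{1,2,3::nat}. \<exists>U. U \<subseteq> N \<and> card U = 4 \<and> n_edges E U = i"
  using assms unfolding standing_assms_def by (elim conjE) assumption

lemma chain4_d: assumes "linear_order_on N R" "u1 \<in> N" "u2 \<in> N" "u3 \<in> N" "u4 \<in> N"
    "lt R u1 u2" "lt R u2 u3" "lt R u3 u4"
  shows "u1 \<noteq> u2" "u1 \<noteq> u3" "u1 \<noteq> u4" "u2 \<noteq> u3" "u2 \<noteq> u4" "u3 \<noteq> u4"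
proof -
  have a: "lt R u1 u3" using lt_trans[OF assms(1,2,3,4,6,7)] .
  have b: "lt R u2 u4" using lt_trans[OF assms(1,3,4,5,7,8)] .
  have c: "lt R u1 u4" using lt_trans[OF assms(1,2,3,5,6) b] .
  show "u1 \<noteq> u2" "u1 \<noteq> u3" "u1 \<noteq> u4" "u2 \<noteq> u3" "u2 \<noteq> u4" "u3 \<noteq> u4"
    using a b c assms(6-8) by (auto simp: lt_def)
qed

lemma neq_wit: "x \<in> A \<Longrightarrow> x \<notin> B \<Longrightarrow> A \<noteq> B" by auto
lemma neq_wit': "x \<in> B \<Longrightarrow> x \<notin> A \<Longrightarrow> A \<noteq> B" by auto
lemma neq_wit2: "A = B \<Longrightarrow> x \<in> A \<Longrightarrow> x \<in> B" by auto

lemma not_in_S: "{e\<in>E. e \<subseteq> U} = {A} \<Longrightarrow> t \<noteq> A \<Longrightarrow> t \<subseteq> U \<Longrightarrow> t \<notin> E" by blast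
lemma not_in_S2: "{e\<in>E. e \<subseteq> U} = {A,B,C} \<Longrightarrow> t \<noteq> A \<Longrightarrow> t \<noteq> B \<Longrightarrow> t \<noteq> C \<Longrightarrow> t \<subseteq> U \<Longrightarrow> t \<notin> E" by blast

lemma in_single: "t \<in> S \<Longrightarrow> S = {A} \<Longrightarrow> t = A" by blast
lemma in_pair: "t \<in> S \<Longrightarrow> S = {A,B} \<Longrightarrow> t = A \<or> t = B" by blast
lemma in_triple: "t \<in> S \<Longrightarrow> S = {A,B,C} \<Longrightarrow> t = A \<or> t = B \<or> t = C" by blast
lemma contra1: "t = A \<Longrightarrow> t \<noteq> A \<Longrightarrow> False" by blast
lemma contra2: "t = A \<or> t = B \<Longrightarrow> t \<noteq> A \<Longrightarrow> t \<noteq> B \<Longrightarrow> False" by blast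
lemma contra3: "t = A \<or> t = B \<or> t = C \<Longrightarrow> t \<noteq> A \<Longrightarrow> t \<noteq> B \<Longrightarrow> t \<noteq> C \<Longrightarrow> False" by blast
lemma inS_E: "t \<in> {e\<in>E. P e} \<Longrightarrow> t \<in> E" by blast

lemma inS2: "{e\<in>E. P e} = S \<Longrightarrow> t \<in> S \<Longrightarrow> t \<in> E" by blast
lemma empty_S: "{e\<in>E. P e} = {} \<Longrightarrow> P t \<Longrightarrow> t \<notin> E" by blast

lemma sa_pat': assumes "standing_assms N E R" "u1 \<in> N" "u2 \<in> N" "u3 \<in> N" "u4 \<in> N"
    "lt R u1 u2" "lt R u2 u3" "lt R u3 u4"
  shows "(n_edges E {u1,u2,u3,u4} = 1 \<longrightarrow> {e\<in>E. e \<subseteq> {u1,u2,u3,u4}} = {{u1,u2,u3}})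
      \<and> (n_edges E {u1,u2,u3,u4} = 2 \<longrightarrow> {e\<in>E. e \<subseteq> {u1,u2,u3,u4}} = {{u1,u3,u4},{u2,u3,u4}})
      \<and> (n_edges E {u1,u2,u3,u4} = 3 \<longrightarrow> {e\<in>E. e \<subseteq> {u1,u2,u3,u4}} = {{u1,u2,u3},{u1,u2,u4},{u1,u3,u4}})"
proof -
  have "u1 \<in> N \<and> u2 \<in> N \<and> u3 \<in> N \<and> u4 \<in> N \<and> lt R u1 u2 \<and> lt R u2 u3 \<and> lt R u3 u4"
    using assms(2-8) by simp
  then show ?thesis using sa_pat[OF assms(1), rule_format, of u1 u2 u3 u4] by fast
qed

lemma four_edge: assumes sa: "standing_assms N E R" and N: "u1 \<in> N" "u2 \<in> N" "u3 \<in> N" "u4 \<in> N"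
  and o: "lt R u1 u2" "lt R u2 u3" "lt R u3 u4"
  and e: "{u1,u2,u3} \<in> E" "{u2,u3,u4} \<in> E"
  shows "{u1,u2,u4} \<in> E \<and> {u1,u3,u4} \<in> E"
proof (rule ccontr)
  assume nc: "\<not> ({u1,u2,u4} \<in> E \<and> {u1,u3,u4} \<in> E)"
  have lin: "linear_order_on N R" using sa by (simp add: standing_assms_def)
  note d = chain4_d[OF lin N o]
  define S where "S = {e\<in>E. e \<subseteq> {u1,u2,u3,u4}}"
  have Ssub: "S \<subseteq> {{u1,u2,u3},{u1,u2,u4},{u1,u3,u4},{u2,u3,u4}}"
  proof
    fix t assume "t \<in> S"
    then have "t \<subseteq> {u1,u2,u3,u4}" "card t = 3" using sa_hg[OF sa] unfolding S_def by auto
    then show "t \<in> {{u1,u2,u3},{u1,u2,u4},{u1,u3,u4},{u2,u3,u4}}" using tri4[OF d] by blast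
  qed
  have fS: "finite S" using finite_subset[OF Ssub] by simp
  have i1: "{u1,u2,u3} \<in> S" "{u2,u3,u4} \<in> S" using e unfolding S_def by auto
  have ne1: "{u2,u3,u4} \<noteq> {u1,u2,u3}" by (rule neq_wit'[of u1]) (use d in auto)
  have ne2: "{u2,u3,u4} \<noteq> {u1,u2,u4}" by (rule neq_wit'[of u1]) (use d in auto)
  have ne3: "{u2,u3,u4} \<noteq> {u1,u3,u4}" by (rule neq_wit'[of u1]) (use d in auto)
  have ne4: "{u1,u2,u3} \<noteq> {u1,u3,u4}" by (rule neq_wit[of u2]) (use d in auto)
  have ne5: "{u1,u2,u3} \<noteq> {u2,u3,u4}" using ne1 by metis
  have P: "(card S = 1 \<longrightarrow> S = {{u1,u2,u3}})
      \<and> (card S = 2 \<longrightarrow> S = {{u1,u3,u4},{u2,u3,u4}})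
      \<and> (card S = 3 \<longrightarrow> S = {{u1,u2,u3},{u1,u2,u4},{u1,u3,u4}})"
    using sa_pat'[OF sa N o] unfolding S_def n_edges_def .
  have n1: "card S \<noteq> 1"
  proof
    assume c: "card S = 1" have S1: "S = {{u1,u2,u3}}" using mp[OF conjunct1[OF P] c] .
    show False by (rule contra1[OF in_single[OF i1(2) S1] ne1])
  qed
  have n2: "card S \<noteq> 2"
  proof
    assume c: "card S = 2" have S1: "S = {{u1,u3,u4},{u2,u3,u4}}" using mp[OF conjunct1[OF conjunct2[OF P]] c] .
    show False by (rule contra2[OF in_pair[OF i1(1) S1] ne4 ne5])
  qed
  have n3: "card S \<noteq> 3"
  proof
    assume c: "card S = 3" have S1: "S = {{u1,u2,u3},{u1,u2,u4},{u1,u3,u4}}" using mp[OF conjunct2[OF conjunct2[OF P]] c] .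
    show False by (rule contra3[OF in_triple[OF i1(2) S1] ne1 ne2 ne3])
  qed
  have n0: "card S \<noteq> 0" using fS i1 by auto
  have "card S \<le> 3"
  proof (cases "{u1,u2,u4} \<in> E")
    case True
    then have "{u1,u3,u4} \<notin> E" using nc by blast
    then have Ss: "S \<subseteq> {{u1,u2,u3},{u1,u2,u4},{u2,u3,u4}}" using Ssub unfolding S_def by blast
    show ?thesis using card_mono[OF _ Ss] card3_le[of "{u1,u2,u3}" "{u1,u2,u4}" "{u2,u3,u4}"] by simp
  next
    case False
    then have Ss: "S \<subseteq> {{u1,u2,u3},{u1,u3,u4},{u2,u3,u4}}" using Ssub unfolding S_def by blast
    show ?thesis using card_mono[OF _ Ss] card3_le[of "{u1,u2,u3}" "{u1,u3,u4}" "{u2,u3,u4}"] by simp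
  qed
  then show False using n0 n1 n2 n3 by linarith
qed

lemma zero_edge: assumes sa: "standing_assms N E R" and N: "u1 \<in> N" "u2 \<in> N" "u3 \<in> N" "u4 \<in> N"
  and o: "lt R u1 u2" "lt R u2 u3" "lt R u3 u4"
  and e: "{u1,u2,u3} \<notin> E" "{u2,u3,u4} \<notin> E"
  shows "{u1,u2,u4} \<notin> E \<and> {u1,u3,u4} \<notin> E"
proof -
  have lin: "linear_order_on N R" using sa by (simp add: standing_assms_def)
  note d = chain4_d[OF lin N o]
  define S where "S = {e\<in>E. e \<subseteq> {u1,u2,u3,u4}}"
  have Ssub: "S \<subseteq> {{u1,u2,u4},{u1,u3,u4}}"
  proof
    fix t assume "t \<in> S"
    then have "t \<subseteq> {u1,u2,u3,u4}" "card t = 3" "t \<in> E" using sa_hg[OF sa] unfolding S_def by auto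
    then show "t \<in> {{u1,u2,u4},{u1,u3,u4}}" using tri4[OF d] e by blast
  qed
  have fS: "finite S" using finite_subset[OF Ssub] by simp
  have P: "(card S = 1 \<longrightarrow> S = {{u1,u2,u3}})
      \<and> (card S = 2 \<longrightarrow> S = {{u1,u3,u4},{u2,u3,u4}})"
    using sa_pat'[OF sa N o] unfolding S_def n_edges_def by (elim conjE) (intro conjI)
  have n1: "card S \<noteq> 1"
  proof
    assume c: "card S = 1" have "S = {{u1,u2,u3}}" using mp[OF conjunct1[OF P] c] .
    then have "{u1,u2,u3} \<in> S" by simp
    then have "{u1,u2,u3} \<in> E" unfolding S_def by (rule inS_E)
    then show False using e(1) by contradiction
  qed
  have n2: "card S \<noteq> 2"
  proof
    assume c: "card S = 2" have "S = {{u1,u3,u4},{u2,u3,u4}}" using mp[OF conjunct2[OF P] c] .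
    then have "{u2,u3,u4} \<in> S" by simp
    then have "{u2,u3,u4} \<in> E" unfolding S_def by (rule inS_E)
    then show False using e(2) by contradiction
  qed
  have "card S \<le> 2" using card_mono[OF _ Ssub] card2_le[of "{u1,u2,u4}" "{u1,u3,u4}"] by simp
  then have "card S = 0" using n1 n2 by linarith
  then have S0: "S = {}" using fS by simp
  have "{u1,u2,u4} \<notin> E" using empty_S[OF S0[unfolded S_def]] by simp
  moreover have "{u1,u3,u4} \<notin> E" using empty_S[OF S0[unfolded S_def]] by simp
  ultimately show ?thesis by blast
qed


lemma one_pat: assumes sa: "standing_assms N E R"
  shows "\<exists>u1 u2 u3 u4. u1 \<in> N \<and> u2 \<in> N \<and> u3 \<in> N \<and> u4 \<in> N \<and> lt R u1 u2 \<and> lt R u2 u3 \<and> lt R u3 u4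
    \<and> {u1,u2,u3} \<in> E \<and> {u1,u2,u4} \<notin> E \<and> {u1,u3,u4} \<notin> E \<and> {u2,u3,u4} \<notin> E"
proof -
  have lin: "linear_order_on N R" using sa by (simp add: standing_assms_def)
  obtain U where U: "U \<subseteq> N" "card U = 4" "n_edges E U = 1" using sa_ex[OF sa] by auto
  obtain u1 u2 u3 u4 where u: "U = {u1,u2,u3,u4}" "lt R u1 u2" "lt R u2 u3" "lt R u3 u4"
     "u1 \<in> N" "u2 \<in> N" "u3 \<in> N" "u4 \<in> N" using sort4[OF lin U(1,2)] by (elim exE conjE) (rule that, assumption+)
  note d = chain4_d[OF lin u(5-8) u(2-4)]
  have nE: "n_edges E {u1,u2,u3,u4} = 1" using U(3) u(1) by simp
  have S: "{e\<in>E. e \<subseteq> {u1,u2,u3,u4}} = {{u1,u2,u3}}"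
    using mp[OF conjunct1[OF sa_pat'[OF sa u(5-8) u(2-4)]] nE] .
  have "{u1,u2,u3} \<in> E" by (rule inS2[OF S]) simp
  moreover have "{u1,u2,u4} \<notin> E"
  proof (rule not_in_S[OF S])
    show "{u1,u2,u4} \<noteq> {u1,u2,u3}" by (rule neq_wit[of u4]) (use d in auto)
  qed simp
  moreover have "{u1,u3,u4} \<notin> E"
  proof (rule not_in_S[OF S])
    show "{u1,u3,u4} \<noteq> {u1,u2,u3}" by (rule neq_wit[of u4]) (use d in auto)
  qed simp
  moreover have "{u2,u3,u4} \<notin> E"
  proof (rule not_in_S[OF S])
    show "{u2,u3,u4} \<noteq> {u1,u2,u3}" by (rule neq_wit[of u4]) (use d in auto)
  qed simp
  ultimately show ?thesis using u by blast
qed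

lemma three_pat: assumes sa: "standing_assms N E R"
  shows "\<exists>u1 u2 u3 u4. u1 \<in> N \<and> u2 \<in> N \<and> u3 \<in> N \<and> u4 \<in> N \<and> lt R u1 u2 \<and> lt R u2 u3 \<and> lt R u3 u4
    \<and> {u1,u2,u3} \<in> E \<and> {u1,u2,u4} \<in> E \<and> {u1,u3,u4} \<in> E \<and> {u2,u3,u4} \<notin> E"
proof -
  have lin: "linear_order_on N R" using sa by (simp add: standing_assms_def)
  obtain U where U: "U \<subseteq> N" "card U = 4" "n_edges E U = 3" using sa_ex[OF sa] by auto
  obtain u1 u2 u3 u4 where u: "U = {u1,u2,u3,u4}" "lt R u1 u2" "lt R u2 u3" "lt R u3 u4"
     "u1 \<in> N" "u2 \<in> N" "u3 \<in> N" "u4 \<in> N" using sort4[OF lin U(1,2)] by (elim exE conjE) (rule that, assumption+)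
  note d = chain4_d[OF lin u(5-8) u(2-4)]
  have nE: "n_edges E {u1,u2,u3,u4} = 3" using U(3) u(1) by simp
  have S: "{e\<in>E. e \<subseteq> {u1,u2,u3,u4}} = {{u1,u2,u3},{u1,u2,u4},{u1,u3,u4}}"
    using mp[OF conjunct2[OF conjunct2[OF sa_pat'[OF sa u(5-8) u(2-4)]]] nE] .
  have "{u1,u2,u3} \<in> E" "{u1,u2,u4} \<in> E" "{u1,u3,u4} \<in> E"
    by (rule inS2[OF S], simp)+
  moreover have "{u2,u3,u4} \<notin> E"
  proof (rule not_in_S2[OF S])
    show "{u2,u3,u4} \<noteq> {u1,u2,u3}" by (rule neq_wit'[of u1]) (use d in auto)
    show "{u2,u3,u4} \<noteq> {u1,u2,u4}" by (rule neq_wit'[of u1]) (use d in auto)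
    show "{u2,u3,u4} \<noteq> {u1,u3,u4}" by (rule neq_wit'[of u1]) (use d in auto)
  qed simp
  ultimately show ?thesis using u by blast
qed


lemma edge_ex: assumes sa: "standing_assms N E R"
  shows "\<exists>p q r. p \<in> N \<and> q \<in> N \<and> r \<in> N \<and> lt R p q \<and> lt R q r \<and> {p,q,r} \<in> E"
  using one_pat[OF sa] by blast

lemma nonedge_ex: assumes sa: "standing_assms N E R"
  shows "\<exists>p q r. p \<in> N \<and> q \<in> N \<and> r \<in> N \<and> lt R p q \<and> lt R q r \<and> {p,q,r} \<notin> E"
  using one_pat[OF sa] by blast

lemma P1: assumes sa: "standing_assms N E R" and N: "x \<in> N" "y \<in> N" and o: "lt R x y"
  shows "\<exists>w\<in>N. lt R x w \<and> lt R w y \<and> {x,w,y} \<in> E"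
proof -
  obtain p q r where s: "p \<in> N" "q \<in> N" "r \<in> N" "lt R p q" "lt R q r" "{p,q,r} \<in> E"
    using edge_ex[OF sa] by (elim exE conjE) (rule that, assumption+)
  have lin: "linear_order_on N R" using sa by (simp add: standing_assms_def)
  have pr: "lt R p r" using lt_trans[OF lin s(1-5)] .
  obtain g where g: "hg_aut N E g" "g p = x" "g r = y" using map2[OF sa s(1,3) N pr o] by blast
  have "lt R (g p) (g q)" "lt R (g q) (g r)" using aut_lt[OF sa g(1)] s by auto
  moreover have "{g p, g q, g r} \<in> E" using aut_E3[OF g(1) s(1-3)] s(6) by simp
  moreover have "g q \<in> N" using aut_N[OF g(1) s(2)] .
  ultimately show ?thesis using g by auto
qed

lemma P2: assumes sa: "standing_assms N E R" and N: "x \<in> N" "y \<in> N" and o: "lt R x y"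
  shows "\<exists>w\<in>N. lt R y w \<and> {x,y,w} \<in> E"
proof -
  obtain p q r where s: "p \<in> N" "q \<in> N" "r \<in> N" "lt R p q" "lt R q r" "{p,q,r} \<in> E"
    using edge_ex[OF sa] by (elim exE conjE) (rule that, assumption+)
  obtain g where g: "hg_aut N E g" "g p = x" "g q = y" using map2[OF sa s(1,2) N s(4) o] by blast
  have "lt R (g q) (g r)" using aut_lt[OF sa g(1)] s by auto
  moreover have "{g p, g q, g r} \<in> E" using aut_E3[OF g(1) s(1-3)] s(6) by simp
  moreover have "g r \<in> N" using aut_N[OF g(1) s(3)] .
  ultimately show ?thesis using g by auto
qed

lemma P3: assumes sa: "standing_assms N E R" and N: "x \<in> N" "y \<in> N" and o: "lt R x y"
  shows "\<exists>w\<in>N. lt R w x \<and> {w,x,y} \<notin> E"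
proof -
  obtain p q r where s: "p \<in> N" "q \<in> N" "r \<in> N" "lt R p q" "lt R q r" "{p,q,r} \<notin> E"
    using nonedge_ex[OF sa] by (elim exE conjE) (rule that, assumption+)
  obtain g where g: "hg_aut N E g" "g q = x" "g r = y" using map2[OF sa s(2,3) N s(5) o] by blast
  have "lt R (g p) (g q)" using aut_lt[OF sa g(1)] s by auto
  moreover have "{g p, g q, g r} \<notin> E" using aut_E3[OF g(1) s(1-3)] s(6) by simp
  moreover have "g p \<in> N" using aut_N[OF g(1) s(1)] .
  ultimately show ?thesis using g by auto
qed

lemma P4: assumes sa: "standing_assms N E R" and N: "x \<in> N" "y \<in> N" and o: "lt R x y"
  shows "\<exists>w\<in>N. lt R x w \<and> lt R w y \<and> {x,w,y} \<notin> E"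
proof -
  obtain p q r where s: "p \<in> N" "q \<in> N" "r \<in> N" "lt R p q" "lt R q r" "{p,q,r} \<notin> E"
    using nonedge_ex[OF sa] by (elim exE conjE) (rule that, assumption+)
  have lin: "linear_order_on N R" using sa by (simp add: standing_assms_def)
  have pr: "lt R p r" using lt_trans[OF lin s(1-5)] .
  obtain g where g: "hg_aut N E g" "g p = x" "g r = y" using map2[OF sa s(1,3) N pr o] by blast
  have "lt R (g p) (g q)" "lt R (g q) (g r)" using aut_lt[OF sa g(1)] s by auto
  moreover have "{g p, g q, g r} \<notin> E" using aut_E3[OF g(1) s(1-3)] s(6) by simp
  moreover have "g q \<in> N" using aut_N[OF g(1) s(2)] .
  ultimately show ?thesis using g by auto
qed

lemma four_pat: assumes sa: "standing_assms N E R"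
  shows "\<exists>s1 s2 s3 s4. s1 \<in> N \<and> s2 \<in> N \<and> s3 \<in> N \<and> s4 \<in> N \<and> lt R s1 s2 \<and> lt R s2 s3 \<and> lt R s3 s4
    \<and> {s1,s2,s3} \<in> E \<and> {s1,s2,s4} \<in> E \<and> {s1,s3,s4} \<in> E \<and> {s2,s3,s4} \<in> E"
proof -
  obtain u1 u2 u3 u4 where u: "u1 \<in> N" "u2 \<in> N" "u3 \<in> N" "u4 \<in> N" "lt R u1 u2" "lt R u2 u3" "lt R u3 u4"
    "{u1,u2,u3} \<in> E" "{u1,u2,u4} \<notin> E" "{u1,u3,u4} \<notin> E" "{u2,u3,u4} \<notin> E"
    using one_pat[OF sa] by (elim exE conjE) (rule that, assumption+)
  obtain v1 v2 v3 v4 where v: "v1 \<in> N" "v2 \<in> N" "v3 \<in> N" "v4 \<in> N" "lt R v1 v2" "lt R v2 v3" "lt R v3 v4"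
    "{v1,v2,v3} \<in> E" "{v1,v2,v4} \<in> E" "{v1,v3,v4} \<in> E" "{v2,v3,v4} \<notin> E"
    using three_pat[OF sa] by (elim exE conjE) (rule that, assumption+)
  have lin: "linear_order_on N R" using sa by (simp add: standing_assms_def)
  have u24: "lt R u2 u4" using lt_trans[OF lin u(2-4) u(6,7)] .
  obtain g where g: "hg_aut N E g" "g v2 = u1" "g v3 = u2" "g v4 = u4"
    using map3[OF sa v(2-4) u(1,2,4) v(6,7) u(5) u24] v(11) u(9) by blast
  have wN: "g v1 \<in> N" using aut_N[OF g(1) v(1)] .
  have wl: "lt R (g v1) u1" using aut_lt[OF sa g(1) v(1,2) v(5)] g(2) by simp
  have e1: "{g v1, u1, u2} \<in> E" using aut_E3[OF g(1) v(1-3)] v(8) g by simp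
  have "{g v1, u1, u3} \<in> E \<and> {g v1, u2, u3} \<in> E"
    using four_edge[OF sa wN u(1-3) wl u(5,6) e1 u(8)] .
  then show ?thesis using wN u wl e1 by blast
qed

lemma zero_pat: assumes sa: "standing_assms N E R"
  shows "\<exists>s1 s2 s3 s4. s1 \<in> N \<and> s2 \<in> N \<and> s3 \<in> N \<and> s4 \<in> N \<and> lt R s1 s2 \<and> lt R s2 s3 \<and> lt R s3 s4
    \<and> {s1,s2,s3} \<notin> E \<and> {s1,s2,s4} \<notin> E \<and> {s1,s3,s4} \<notin> E \<and> {s2,s3,s4} \<notin> E"
proof -
  obtain u1 u2 u3 u4 where u: "u1 \<in> N" "u2 \<in> N" "u3 \<in> N" "u4 \<in> N" "lt R u1 u2" "lt R u2 u3" "lt R u3 u4"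
    "{u1,u2,u3} \<in> E" "{u1,u2,u4} \<notin> E" "{u1,u3,u4} \<notin> E" "{u2,u3,u4} \<notin> E"
    using one_pat[OF sa] by (elim exE conjE) (rule that, assumption+)
  obtain v1 v2 v3 v4 where v: "v1 \<in> N" "v2 \<in> N" "v3 \<in> N" "v4 \<in> N" "lt R v1 v2" "lt R v2 v3" "lt R v3 v4"
    "{v1,v2,v3} \<in> E" "{v1,v2,v4} \<in> E" "{v1,v3,v4} \<in> E" "{v2,v3,v4} \<notin> E"
    using three_pat[OF sa] by (elim exE conjE) (rule that, assumption+)
  have lin: "linear_order_on N R" using sa by (simp add: standing_assms_def)
  have v13: "lt R v1 v3" using lt_trans[OF lin v(1-3) v(5,6)] .
  obtain g where g: "hg_aut N E g" "g u1 = v1" "g u2 = v3" "g u3 = v4"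
    using map3[OF sa u(1-3) v(1,3,4) u(5,6) v13 v(7)] v(10) u(8) by blast
  have wN: "g u4 \<in> N" using aut_N[OF g(1) u(4)] .
  have wl: "lt R v4 (g u4)" using aut_lt[OF sa g(1) u(3,4) u(7)] g(4) by simp
  have e1: "{v3, v4, g u4} \<notin> E" using aut_E3[OF g(1) u(2-4)] u(11) g by simp
  have "{v2, v3, g u4} \<notin> E \<and> {v2, v4, g u4} \<notin> E"
    using zero_edge[OF sa v(2-4) wN v(6,7) wl v(11) e1] .
  then show ?thesis using wN v wl e1 by blast
qed

lemma T1: assumes sa: "standing_assms N E R" and N: "x \<in> N" "a \<in> N" "b \<in> N"
  and o: "lt R x a" "lt R a b" and e: "{x,a,b} \<in> E"
  shows "\<exists>w\<in>N. lt R x w \<and> lt R w a \<and> {w,a,b} \<in> E \<and> {x,w,a} \<in> E \<and> {x,w,b} \<in> E"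
proof -
  obtain s1 s2 s3 s4 where s: "s1 \<in> N" "s2 \<in> N" "s3 \<in> N" "s4 \<in> N" "lt R s1 s2" "lt R s2 s3" "lt R s3 s4"
    "{s1,s2,s3} \<in> E" "{s1,s2,s4} \<in> E" "{s1,s3,s4} \<in> E" "{s2,s3,s4} \<in> E"
    using four_pat[OF sa] by (elim exE conjE) (rule that, assumption+)
  have lin: "linear_order_on N R" using sa by (simp add: standing_assms_def)
  have s13: "lt R s1 s3" using lt_trans[OF lin s(1-3) s(5,6)] .
  obtain g where g: "hg_aut N E g" "g s1 = x" "g s3 = a" "g s4 = b"
    using map3[OF sa s(1,3,4) N s13 s(7) o] s(10) e by blast
  have wN: "g s2 \<in> N" using aut_N[OF g(1) s(2)] .
  have "lt R (g s1) (g s2)" "lt R (g s2) (g s3)" using aut_lt[OF sa g(1)] s by auto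
  moreover have "{g s2, g s3, g s4} \<in> E" "{g s1, g s2, g s3} \<in> E" "{g s1, g s2, g s4} \<in> E"
    using aut_E3[OF g(1)] s by auto
  ultimately show ?thesis using wN g by auto
qed

lemma T2: assumes sa: "standing_assms N E R" and N: "x \<in> N" "a \<in> N" "b \<in> N"
  and o: "lt R x a" "lt R a b" and e: "{x,a,b} \<in> E"
  shows "\<exists>w\<in>N. lt R b w \<and> {a,b,w} \<notin> E \<and> {x,a,w} \<in> E \<and> {x,b,w} \<in> E"
proof -
  obtain s1 s2 s3 s4 where s: "s1 \<in> N" "s2 \<in> N" "s3 \<in> N" "s4 \<in> N" "lt R s1 s2" "lt R s2 s3" "lt R s3 s4"
    "{s1,s2,s3} \<in> E" "{s1,s2,s4} \<in> E" "{s1,s3,s4} \<in> E" "{s2,s3,s4} \<notin> E"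
    using three_pat[OF sa] by (elim exE conjE) (rule that, assumption+)
  obtain g where g: "hg_aut N E g" "g s1 = x" "g s2 = a" "g s3 = b"
    using map3[OF sa s(1,2,3) N s(5,6) o] s(8) e by blast
  have wN: "g s4 \<in> N" using aut_N[OF g(1) s(4)] .
  have "lt R (g s3) (g s4)" using aut_lt[OF sa g(1)] s by auto
  moreover have "{g s2, g s3, g s4} \<notin> E" "{g s1, g s2, g s4} \<in> E" "{g s1, g s3, g s4} \<in> E"
    using aut_E3[OF g(1)] s by auto
  ultimately show ?thesis using wN g by auto
qed

lemma T3: assumes sa: "standing_assms N E R" and N: "a \<in> N" "b \<in> N" "x \<in> N"
  and o: "lt R a b" "lt R b x" and e: "{a,b,x} \<notin> E"
  shows "\<exists>w\<in>N. lt R w a \<and> {w,a,b} \<in> E \<and> {w,a,x} \<notin> E \<and> {w,b,x} \<notin> E"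
proof -
  obtain s1 s2 s3 s4 where s: "s1 \<in> N" "s2 \<in> N" "s3 \<in> N" "s4 \<in> N" "lt R s1 s2" "lt R s2 s3" "lt R s3 s4"
    "{s1,s2,s3} \<in> E" "{s1,s2,s4} \<notin> E" "{s1,s3,s4} \<notin> E" "{s2,s3,s4} \<notin> E"
    using one_pat[OF sa] by (elim exE conjE) (rule that, assumption+)
  obtain g where g: "hg_aut N E g" "g s2 = a" "g s3 = b" "g s4 = x"
    using map3[OF sa s(2,3,4) N s(6,7) o] s(11) e by blast
  have wN: "g s1 \<in> N" using aut_N[OF g(1) s(1)] .
  have "lt R (g s1) (g s2)" using aut_lt[OF sa g(1)] s by auto
  moreover have "{g s1, g s2, g s3} \<in> E" "{g s1, g s2, g s4} \<notin> E" "{g s1, g s3, g s4} \<notin> E"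
    using aut_E3[OF g(1)] s by auto
  ultimately show ?thesis using wN g by auto
qed

lemma T4: assumes sa: "standing_assms N E R" and N: "a \<in> N" "b \<in> N" "x \<in> N"
  and o: "lt R a b" "lt R b x" and e: "{a,b,x} \<notin> E"
  shows "\<exists>w\<in>N. lt R b w \<and> lt R w x \<and> {a,b,w} \<notin> E \<and> {a,w,x} \<notin> E \<and> {b,w,x} \<notin> E"
proof -
  obtain s1 s2 s3 s4 where s: "s1 \<in> N" "s2 \<in> N" "s3 \<in> N" "s4 \<in> N" "lt R s1 s2" "lt R s2 s3" "lt R s3 s4"
    "{s1,s2,s3} \<notin> E" "{s1,s2,s4} \<notin> E" "{s1,s3,s4} \<notin> E" "{s2,s3,s4} \<notin> E"
    using zero_pat[OF sa] by (elim exE conjE) (rule that, assumption+)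
  have lin: "linear_order_on N R" using sa by (simp add: standing_assms_def)
  have s24: "lt R s2 s4" using lt_trans[OF lin s(2-4) s(6,7)] .
  obtain g where g: "hg_aut N E g" "g s1 = a" "g s2 = b" "g s4 = x"
    using map3[OF sa s(1,2,4) N s(5) s24 o] s(9) e by blast
  have wN: "g s3 \<in> N" using aut_N[OF g(1) s(3)] .
  have "lt R (g s2) (g s3)" "lt R (g s3) (g s4)" using aut_lt[OF sa g(1)] s by auto
  moreover have "{g s1, g s2, g s3} \<notin> E" "{g s1, g s3, g s4} \<notin> E" "{g s2, g s3, g s4} \<notin> E"
    using aut_E3[OF g(1)] s by auto
  ultimately show ?thesis using wN g by auto
qed


lemma lt_neq: "lt R x y \<Longrightarrow> x \<noteq> y" by (simp add: lt_def)

lemma C_eq: "y \<noteq> x \<Longrightarrow> Crel E R x y y" by (simp add: Crel_def)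

lemma C_lo: "lt R x y \<Longrightarrow> lt R x z \<Longrightarrow> y \<noteq> z \<Longrightarrow> {x,y,z} \<in> E \<Longrightarrow> Crel E R x y z"
  unfolding Crel_def lt_def by blast

lemma C_hi: "lt R y x \<Longrightarrow> lt R z x \<Longrightarrow> y \<noteq> z \<Longrightarrow> {x,y,z} \<notin> E \<Longrightarrow> Crel E R x y z"
  unfolding Crel_def lt_def by blast

lemma goal_intro:
  "w1 \<in> N \<Longrightarrow> Crel E R w1 y z \<Longrightarrow> Crel E R x y w1 \<Longrightarrow> lt R w1 y \<Longrightarrow> lt R w1 z \<Longrightarrow>
   w2 \<in> N \<Longrightarrow> Crel E R w2 y z \<Longrightarrow> Crel E R x y w2 \<Longrightarrow> lt R y w2 \<Longrightarrow> lt R z w2 \<Longrightarrow>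
   (\<exists>w1\<in>N. Crel E R w1 y z \<and> Crel E R x y w1 \<and> lt R w1 y \<and> lt R w1 z)
   \<and> (\<exists>w2\<in>N. Crel E R w2 y z \<and> Crel E R x y w2 \<and> lt R y w2 \<and> lt R z w2)"
  by blast

theorem lemma3p11:
  fixes N :: "'a set" and E :: "'a set set" and R :: "'a rel"
  assumes "standing_assms N E R"
  shows "(\<forall>x\<in>N. \<forall>y\<in>N. \<forall>z\<in>N. lt R x y \<and> lt R y z \<longrightarrow> Crel E R x y z \<or> Crel E R z x y)
       \<and> (\<forall>x\<in>N. \<forall>y\<in>N. \<forall>z\<in>N. Crel E R x y z \<longrightarrow>
           (\<exists>w1\<in>N. Crel E R w1 y z \<and> Crel E R x y w1 \<and> lt R w1 y \<and> lt R w1 z)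
         \<and> (\<exists>w2\<in>N. Crel E R w2 y z \<and> Crel E R x y w2 \<and> lt R y w2 \<and> lt R z w2))"
proof -
  note sa = assms
  have lin: "linear_order_on N R" using sa by (simp add: standing_assms_def)
  have part1: "\<forall>x\<in>N. \<forall>y\<in>N. \<forall>z\<in>N. lt R x y \<and> lt R y z \<longrightarrow> Crel E R x y z \<or> Crel E R z x y"
  proof (intro ballI impI)
    fix x y z assume N: "x \<in> N" "y \<in> N" "z \<in> N" and h: "lt R x y \<and> lt R y z"
    have xy: "lt R x y" and yz: "lt R y z" using h by auto
    have xz: "lt R x z" using lt_trans[OF lin N xy yz] .
    show "Crel E R x y z \<or> Crel E R z x y"
    proof (cases "{x,y,z} \<in> E")
      case True
      then have "Crel E R x y z" using C_lo[OF xy xz lt_neq[OF yz]] by simp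
      then show ?thesis by simp
    next
      case False
      then have "{z,x,y} \<notin> E" by (simp add: insert_commute)
      then have "Crel E R z x y" using C_hi[OF xz yz lt_neq[OF xy]] by simp
      then show ?thesis by simp
    qed
  qed
  have part2: "\<forall>x\<in>N. \<forall>y\<in>N. \<forall>z\<in>N. Crel E R x y z \<longrightarrow>
           (\<exists>w1\<in>N. Crel E R w1 y z \<and> Crel E R x y w1 \<and> lt R w1 y \<and> lt R w1 z)
         \<and> (\<exists>w2\<in>N. Crel E R w2 y z \<and> Crel E R x y w2 \<and> lt R y w2 \<and> lt R z w2)"
  proof (intro ballI impI)
    fix x y z assume xN: "x \<in> N" and yN: "y \<in> N" and zN: "z \<in> N" and c: "Crel E R x y z"
    from c consider (A) "y = z" "z \<noteq> x"
      | (B) "y \<noteq> z" "lt R x y" "lt R x z" "{x,y,z} \<in> E"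
      | (C) "y \<noteq> z" "lt R y x" "lt R z x" "{x,y,z} \<notin> E"
      unfolding Crel_def by blast
    then show "(\<exists>w1\<in>N. Crel E R w1 y z \<and> Crel E R x y w1 \<and> lt R w1 y \<and> lt R w1 z)
         \<and> (\<exists>w2\<in>N. Crel E R w2 y z \<and> Crel E R x y w2 \<and> lt R y w2 \<and> lt R z w2)"
    proof cases
      case A
      have zy: "z = y" using A(1) by simp
      have "x \<noteq> y" using A by simp
      then consider (A1) "lt R x y" | (A2) "lt R y x" using lt_total[OF lin xN yN] by blast
      then show ?thesis
      proof cases
        case A1
        obtain w1 where w1: "w1 \<in> N" "lt R x w1" "lt R w1 y" "{x,w1,y} \<in> E" using P1[OF sa xN yN A1] by blast
        obtain w2 where w2: "w2 \<in> N" "lt R y w2" "{x,y,w2} \<in> E" using P2[OF sa xN yN A1] by blast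
        have e1: "{x,y,w1} \<in> E" using w1(4) by (simp add: insert_commute)
        have xw2: "lt R x w2" using lt_trans[OF lin xN yN w2(1) A1 w2(2)] .
        show ?thesis
          apply (rule goal_intro[OF w1(1) _ _ w1(3) _ w2(1) _ _ w2(2)]) unfolding zy
          apply (rule C_eq, use lt_neq[OF w1(3)] in simp)
          apply (rule C_lo[OF A1 w1(2) lt_neq[OF w1(3), symmetric] e1])
          apply (rule w1(3))
          apply (rule C_eq, use lt_neq[OF w2(2)] in simp)
          apply (rule C_lo[OF A1 xw2 lt_neq[OF w2(2)] w2(3)])
          apply (rule w2(2))
          done
      next
        case A2
        obtain w1 where w1: "w1 \<in> N" "lt R w1 y" "{w1,y,x} \<notin> E" using P3[OF sa yN xN A2] by blast
        obtain w2 where w2: "w2 \<in> N" "lt R y w2" "lt R w2 x" "{y,w2,x} \<notin> E" using P4[OF sa yN xN A2] by blast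
        have e1: "{x,y,w1} \<notin> E" using w1(3) by (simp add: insert_commute)
        have e2: "{x,y,w2} \<notin> E" using w2(4) by (simp add: insert_commute)
        have w1x: "lt R w1 x" using lt_trans[OF lin w1(1) yN xN w1(2) A2] .
        show ?thesis
          apply (rule goal_intro[OF w1(1) _ _ w1(2) _ w2(1) _ _ w2(2)]) unfolding zy
          apply (rule C_eq, use lt_neq[OF w1(2)] in simp)
          apply (rule C_hi[OF A2 w1x lt_neq[OF w1(2), symmetric] e1])
          apply (rule w1(2))
          apply (rule C_eq, use lt_neq[OF w2(2)] in simp)
          apply (rule C_hi[OF A2 w2(3) lt_neq[OF w2(2)] e2])
          apply (rule w2(2))
          done
      qed
    next
      case B
      consider (B1) "lt R y z" | (B2) "lt R z y" using lt_total[OF lin yN zN B(1)] by blast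
      then show ?thesis
      proof cases
        case B1
        obtain w1 where w1: "w1 \<in> N" "lt R x w1" "lt R w1 y" "{w1,y,z} \<in> E" "{x,w1,y} \<in> E" "{x,w1,z} \<in> E"
          using T1[OF sa xN yN zN B(2) B1 B(4)] by blast
        obtain w2 where w2: "w2 \<in> N" "lt R z w2" "{y,z,w2} \<notin> E" "{x,y,w2} \<in> E" "{x,z,w2} \<in> E"
          using T2[OF sa xN yN zN B(2) B1 B(4)] by blast
        have w1z: "lt R w1 z" using lt_trans[OF lin w1(1) yN zN w1(3) B1] .
        have yw2: "lt R y w2" using lt_trans[OF lin yN zN w2(1) B1 w2(2)] .
        have xw2: "lt R x w2" using lt_trans[OF lin xN yN w2(1) B(2) yw2] .
        have e1: "{x,y,w1} \<in> E" using w1(5) by (simp add: insert_commute)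
        have e2: "{w2,y,z} \<notin> E" using w2(3) by (simp add: insert_commute)
        show ?thesis
          by (rule goal_intro[OF w1(1) C_lo[OF w1(3) w1z B(1) w1(4)]
                C_lo[OF B(2) w1(2) lt_neq[OF w1(3), symmetric] e1] w1(3) w1z
                w2(1) C_hi[OF yw2 w2(2) B(1) e2] C_lo[OF B(2) xw2 lt_neq[OF yw2] w2(4)] yw2 w2(2)])
      next
        case B2
        have e0: "{x,z,y} \<in> E" using B(4) by (simp add: insert_commute)
        obtain w1 where w1: "w1 \<in> N" "lt R x w1" "lt R w1 z" "{w1,z,y} \<in> E" "{x,w1,z} \<in> E" "{x,w1,y} \<in> E"
          using T1[OF sa xN zN yN B(3) B2 e0] by blast
        obtain w2 where w2: "w2 \<in> N" "lt R y w2" "{z,y,w2} \<notin> E" "{x,z,w2} \<in> E" "{x,y,w2} \<in> E"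
          using T2[OF sa xN zN yN B(3) B2 e0] by blast
        have w1y: "lt R w1 y" using lt_trans[OF lin w1(1) zN yN w1(3) B2] .
        have zw2: "lt R z w2" using lt_trans[OF lin zN yN w2(1) B2 w2(2)] .
        have xw2: "lt R x w2" using lt_trans[OF lin xN yN w2(1) B(2) w2(2)] .
        have e1: "{x,y,w1} \<in> E" using w1(6) by (simp add: insert_commute)
        have e1': "{w1,y,z} \<in> E" using w1(4) by (simp add: insert_commute)
        have e2: "{w2,y,z} \<notin> E" using w2(3) by (simp add: insert_commute)
        show ?thesis
          by (rule goal_intro[OF w1(1) C_lo[OF w1y w1(3) B(1) e1']
                C_lo[OF B(2) w1(2) lt_neq[OF w1y, symmetric] e1] w1y w1(3)
                w2(1) C_hi[OF w2(2) zw2 B(1) e2] C_lo[OF B(2) xw2 lt_neq[OF w2(2)] w2(5)] w2(2) zw2])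
      qed
    next
      case C
      consider (C1) "lt R y z" | (C2) "lt R z y" using lt_total[OF lin yN zN C(1)] by blast
      then show ?thesis
      proof cases
        case C1
        have e0: "{y,z,x} \<notin> E" using C(4) by (simp add: insert_commute)
        obtain w1 where w1: "w1 \<in> N" "lt R w1 y" "{w1,y,z} \<in> E" "{w1,y,x} \<notin> E" "{w1,z,x} \<notin> E"
          using T3[OF sa yN zN xN C1 C(3) e0] by blast
        obtain w2 where w2: "w2 \<in> N" "lt R z w2" "lt R w2 x" "{y,z,w2} \<notin> E" "{y,w2,x} \<notin> E" "{z,w2,x} \<notin> E"
          using T4[OF sa yN zN xN C1 C(3) e0] by blast
        have w1z: "lt R w1 z" using lt_trans[OF lin w1(1) yN zN w1(2) C1] .
        have w1x: "lt R w1 x" using lt_trans[OF lin w1(1) yN xN w1(2) C(2)] .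
        have yw2: "lt R y w2" using lt_trans[OF lin yN zN w2(1) C1 w2(2)] .
        have e1: "{x,y,w1} \<notin> E" using w1(4) by (simp add: insert_commute)
        have e2: "{w2,y,z} \<notin> E" using w2(4) by (simp add: insert_commute)
        have e3: "{x,y,w2} \<notin> E" using w2(5) by (simp add: insert_commute)
        show ?thesis
          by (rule goal_intro[OF w1(1) C_lo[OF w1(2) w1z C(1) w1(3)]
                C_hi[OF C(2) w1x lt_neq[OF w1(2), symmetric] e1] w1(2) w1z
                w2(1) C_hi[OF yw2 w2(2) C(1) e2] C_hi[OF C(2) w2(3) lt_neq[OF yw2] e3] yw2 w2(2)])
      next
        case C2
        have e0: "{z,y,x} \<notin> E" using C(4) by (simp add: insert_commute)
        obtain w1 where w1: "w1 \<in> N" "lt R w1 z" "{w1,z,y} \<in> E" "{w1,z,x} \<notin> E" "{w1,y,x} \<notin> E"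
          using T3[OF sa zN yN xN C2 C(2) e0] by blast
        obtain w2 where w2: "w2 \<in> N" "lt R y w2" "lt R w2 x" "{z,y,w2} \<notin> E" "{z,w2,x} \<notin> E" "{y,w2,x} \<notin> E"
          using T4[OF sa zN yN xN C2 C(2) e0] by blast
        have w1y: "lt R w1 y" using lt_trans[OF lin w1(1) zN yN w1(2) C2] .
        have w1x: "lt R w1 x" using lt_trans[OF lin w1(1) zN xN w1(2) C(3)] .
        have zw2: "lt R z w2" using lt_trans[OF lin zN yN w2(1) C2 w2(2)] .
        have e1': "{w1,y,z} \<in> E" using w1(3) by (simp add: insert_commute)
        have e1: "{x,y,w1} \<notin> E" using w1(5) by (simp add: insert_commute)
        have e2: "{w2,y,z} \<notin> E" using w2(4) by (simp add: insert_commute)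
        have e3: "{x,y,w2} \<notin> E" using w2(6) by (simp add: insert_commute)
        show ?thesis
          by (rule goal_intro[OF w1(1) C_lo[OF w1y w1(2) C(1) e1']
                C_hi[OF C(2) w1x lt_neq[OF w1y, symmetric] e1] w1y w1(2)
                w2(1) C_hi[OF w2(2) zw2 C(1) e2] C_hi[OF C(2) w2(3) lt_neq[OF w2(2)] e3] w2(2) zw2])
      qed
    qed
  qed
  show ?thesis using part1 part2 by blast
qed

end
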